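(* Let $n,k$ be positive integers with $n\ge k$. The integer $|\mathrm{ls}(n,k)|=|\mathrm{js}_n^k(1)|$ is the number of ordered pairs $(\sigma,\tau)$, where $\sigma$ is a permutation of $[n]_0=\{0,1,\dots,n\}$ with $k$ cycles and $\tau$ is a permutation of $[n]=\{1,\dots,n\}$ with $k$ cycles, such that $1\in\mathrm{Orb}_\sigma(0)$ and $\min\sigma=\min\tau$.
   Context: $\mathrm{js}_n^k(z)$ is defined by $\mathrm{js}_0^0(z)=1$, $\mathrm{js}_n^k(z)=0$ if $k\notin\{1,\dots,n\}$ (for $(n,k)\ne(0,0)$), and $\mathrm{js}_n^k(z)=\mathrm{js}_{n-1}^{k-1}(z)-(n-1)(n-1+z)\mathrm{js}_{n-1}^k(z)$ for $n,k\ge1$. The Legendre-Stirling numbers of the first kind are $\mathrm{ls}(n,k)=\mathrm{js}_n^k(1)$. For a permutation $\sigma$ and $j$ in its domain, $\mathrm{Orb}_\sigma(j)=\{\sigma^\ell(j):\ell\ge1\}$, and $\min(\sigma)=\{j\in[n]:j=\min(\mathrm{Orb}_\sigma(j)\cap[n])\}$ is the set of cyclic minima. *)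

theory Defs
  imports "HOL-Combinatorics.Permutations"
begin

fun js :: "int \<Rightarrow> nat \<Rightarrow> nat \<Rightarrow> int" where
  "js z 0 k = (if k = 0 then 1 else 0)"
| "js z (Suc n) k =
     (if k < 1 \<or> k > Suc n then 0
      else js z n (k - 1) - int n * (int n + z) * js z n k)"

definition ls :: "nat \<Rightarrow> nat \<Rightarrow> int" where
  "ls n k = js 1 n k"

definition Orb :: "(nat \<Rightarrow> nat) \<Rightarrow> nat \<Rightarrow> nat set" where
  "Orb \<sigma> j = {(\<sigma> ^^ l) j | l. l \<ge> 1}"

definition num_cycles :: "(nat \<Rightarrow> nat) \<Rightarrow> nat set \<Rightarrow> nat" where
  "num_cycles \<sigma> S = card ((\<lambda>j. Orb \<sigma> j) ` S)"

definition cyc_min :: "(nat \<Rightarrow> nat) \<Rightarrow> nat \<Rightarrow> nat set" where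
  "cyc_min \<sigma> n = {j \<in> {1..n}. j = Min (Orb \<sigma> j \<inter> {1..n})}"

end

theory Submission
  imports Defs "HOL-Combinatorics.Orbits"
begin

lemma Orb_orbit: "Orb f j = orbit f j"
  unfolding Orb_def orbit_altdef by (auto simp: Suc_le_eq)

lemma cyc_min_alt: "cyc_min f n = {j \<in> {1..n}. j = Min (orbit f j \<inter> {1..n})}"
  unfolding cyc_min_def Orb_orbit ..

definition rm :: "(nat \<Rightarrow> nat) \<Rightarrow> nat \<Rightarrow> nat \<Rightarrow> nat" where
  "rm f n z = (if z = n then n else if f z = n then f n else f z)"

lemma rm_aux:
  assumes "z = x \<or> z \<in> orbit f x" "z \<noteq> n" "inj f"
  shows "rm f n z \<in> orbit f x \<and> rm f n z \<noteq> n"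
proof -
  have fz: "f z \<in> orbit f x" using assms(1) by (auto intro: orbit.intros)
  show ?thesis
  proof (cases "f z = n")
    case True
    then have "f n \<in> orbit f x" using fz by (metis orbit.step)
    moreover have "f n \<noteq> n" using True assms(2,3) by (metis injD)
    ultimately show ?thesis using True assms(2) by (simp add: rm_def)
  qed (use fz assms in \<open>simp add: rm_def\<close>)
qed

lemma orbit_rm1:
  assumes "y \<in> orbit (rm f n) x" "x \<noteq> n" "inj f"
  shows "y \<in> orbit f x \<and> y \<noteq> n"
  using assms(1)
proof induct
  case base
  then show ?case using rm_aux[of x x f n] assms by simp
next
  case (step y)
  then show ?case using rm_aux[of y x f n] assms by simp
qed

lemma orbit_rm2:
  assumes "y \<in> orbit f x" "x \<noteq> n"
  shows "(y \<noteq> n \<longrightarrow> y \<in> orbit (rm f n) x) \<and> (y = n \<longrightarrow> f n \<in> orbit (rm f n) x)"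
  using assms(1)
proof induct
  case base
  have "rm f n x \<in> orbit (rm f n) x" by (rule orbit.base)
  moreover have "rm f n x = (if f x = n then f n else f x)" using assms(2) by (simp add: rm_def)
  ultimately show ?case using assms(2) by (auto split: if_splits)
next
  case (step y)
  show ?case
  proof (cases "y = n")
    case True
    then show ?thesis using step by auto
  next
    case False
    then have y: "y \<in> orbit (rm f n) x" using step by auto
    have "rm f n y \<in> orbit (rm f n) x" using y by (rule orbit.step)
    moreover have "rm f n y = (if f y = n then f n else f y)" using False by (simp add: rm_def)
    ultimately show ?thesis using False y by (auto split: if_splits)
  qed
qed

lemma orbit_rm:
  assumes "x \<noteq> n" "inj f"
  shows "orbit (rm f n) x = orbit f x - {n}"
  using orbit_rm1[OF _ assms(1,2)] orbit_rm2[OF _ assms(1)] by blast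

lemma orbit_eq:
  assumes "permutation f" "y \<in> orbit f x"
  shows "orbit f y = orbit f x"
proof
  show "orbit f y \<subseteq> orbit f x" using assms(2) orbit_trans by fast
  have "x \<in> orbit f y"
    using orbit_swap[OF permutation_self_in_orbit[OF assms(1)] assms(2)] .
  then show "orbit f x \<subseteq> orbit f y" using orbit_trans by fast
qed


lemma step_perm:
  assumes "n \<notin> B" "p permutes B" "b \<in> insert n B"
  shows "transpose n b \<circ> p permutes insert n B"
    and "(transpose n b \<circ> p) n = b"
    and "rm (transpose n b \<circ> p) n = p"
proof -
  have q: "p permutes insert n B" using assms(2) permutes_subset by blast
  show "transpose n b \<circ> p permutes insert n B"
    using permutes_compose[OF q permutes_swap_id[of n "insert n B" b]] assms(3) by simp
  have pn: "p n = n" using assms(1,2) permutes_not_in by metis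
  then show fn: "(transpose n b \<circ> p) n = b" by simp
  show "rm (transpose n b \<circ> p) n = p"
  proof
    fix z
    show "rm (transpose n b \<circ> p) n z = p z"
    proof (cases "z = n")
      case True then show ?thesis using pn by (simp add: rm_def)
    next
      case False
      then have pz: "p z \<noteq> n" using pn permutes_inj[OF assms(2)] by (metis injD)
      show ?thesis
      proof (cases "p z = b")
        case True
        then show ?thesis using False pz fn by (simp add: rm_def)
      next
        case F2: False
        then show ?thesis using False pz by (simp add: rm_def transpose_def)
      qed
    qed
  qed
qed

lemma count_insert:
  fixes n :: nat
  assumes "finite B" "n \<notin> B"
  shows "card {f. f permutes insert n B \<and> Q f}
       = (\<Sum>b\<in>insert n B. card {p. p permutes B \<and> Q (transpose n b \<circ> p)})"
proof -
  let ?S = "SIGMA b:insert n B. {p. p permutes B \<and> Q (transpose n b \<circ> p)}"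
  let ?h = "\<lambda>(b, p). transpose n b \<circ> p"
  have eq: "{f. f permutes insert n B \<and> Q f} = ?h ` ?S"
  proof (intro set_eqI iffI)
    fix f assume f: "f \<in> {f. f permutes insert n B \<and> Q f}"
    then have fp: "f permutes insert n B" and "Q f" by auto
    let ?p = "transpose n (f n) \<circ> f"
    have "?p permutes B" using permutes_insert_lemma[OF fp] .
    moreover have "f = transpose n (f n) \<circ> ?p" by (simp add: fun_eq_iff)
    moreover have "f n \<in> insert n B" using permutes_in_image[OF fp] by simp
    ultimately show "f \<in> ?h ` ?S" using \<open>Q f\<close> by (auto intro!: image_eqI[of _ _ "(f n, ?p)"])
  next
    fix f assume "f \<in> ?h ` ?S"
    then show "f \<in> {f. f permutes insert n B \<and> Q f}"
      using step_perm(1)[OF assms(2)] by auto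
  qed
  have inj: "inj_on ?h ?S"
  proof (rule inj_onI)
    fix x y
    assume hx: "x \<in> ?S" and hy: "y \<in> ?S" and h: "?h x = ?h y"
    obtain b p where x: "x = (b, p)" by fastforce
    obtain b' p' where y: "y = (b', p')" by fastforce
    have h': "transpose n b \<circ> p = transpose n b' \<circ> p'" using h x y by simp
    have "p permutes B" "b \<in> insert n B" "p' permutes B" "b' \<in> insert n B" using hx hy x y by auto
    then have "b = b' \<and> p = p'"
      using step_perm(2,3)[OF assms(2)] h' by metis
    then show "x = y" using x y by simp
  qed
  have fin: "finite {p. p permutes B \<and> Q (transpose n b \<circ> p)}" for b
    using finite_permutations[OF assms(1)] by (rule finite_subset[rotated]) auto
  have "card {f. f permutes insert n B \<and> Q f} = card ?S"
    unfolding eq using card_image[OF inj] .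
  also have "\<dots> = (\<Sum>b\<in>insert n B. card {p. p permutes B \<and> Q (transpose n b \<circ> p)})"
    using assms(1) fin by (subst card_SigmaI) auto
  finally show ?thesis .
qed

lemma Min_remove:
  assumes "finite X" "j \<in> X" "j < n" "\<forall>x\<in>X. x \<le> n"
  shows "Min (X - {n}) = Min X"
proof -
  have "Min X \<le> j" using assms by simp
  then have "Min X \<noteq> n" using assms(3) by simp
  moreover have "Min X \<in> X" using assms(1,2) by (intro Min_in) auto
  ultimately have "Min X \<in> X - {n}" by simp
  then show ?thesis using assms by (intro Min_eqI) auto
qed

lemma cyc_min_subset: "cyc_min f n \<subseteq> {1..n}"
  unfolding cyc_min_def by auto

lemma hi_lemma:
  assumes fp: "f permutes A" and A: "A \<subseteq> {0..n}" "n \<in> A" and n: "n \<ge> 1"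
    and h0: "0 \<in> A \<longrightarrow> 1 \<in> orbit f 0 \<and> n \<ge> 2"
  shows "n \<in> cyc_min f n \<longleftrightarrow> f n = n"
proof
  assume "f n = n"
  then have o: "orbit f n = {n}" by (simp add: orbit_eq_singleton_iff)
  have "{n} \<inter> {1..n} = {n}" using n by auto
  then have "n = Min (orbit f n \<inter> {1..n})" unfolding o by simp
  then show "n \<in> cyc_min f n" using n unfolding cyc_min_alt by simp
next
  assume mem: "n \<in> cyc_min f n"
  show "f n = n"
  proof (rule ccontr)
    assume ne: "f n \<noteq> n"
    have fnA: "f n \<in> A" using permutes_in_image[OF fp] A(2) by simp
    have fno: "f n \<in> orbit f n" by (rule orbit.base)
    obtain m where m: "m \<in> orbit f n" "1 \<le> m" "m < n"
    proof (cases "f n = 0")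
      case True
      have h1: "1 \<in> orbit f 0" and n2: "n \<ge> 2" using h0 fnA True by auto
      have "0 \<in> orbit f n" using fno True by simp
      then have "1 \<in> orbit f n" using orbit_trans[OF h1] by blast
      then show ?thesis using that n2 by auto
    next
      case False
      have "f n \<le> n" using fnA A(1) by auto
      then have "1 \<le> f n" "f n < n" using False ne by auto
      then show ?thesis using that fno by blast
    qed
    have fi: "finite (orbit f n \<inter> {1..n})" by simp
    have "m \<in> orbit f n \<inter> {1..n}" using m by auto
    then have "Min (orbit f n \<inter> {1..n}) \<le> m" using fi by (rule Min_le[rotated])
    moreover have "n = Min (orbit f n \<inter> {1..n})" using mem unfolding cyc_min_alt by simp
    ultimately show False using m(3) by linarith
  qed
qed
lemma lo_lemma:
  assumes perm: "permutation f" and j: "j \<in> {1..n-1}"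
  shows "j \<in> cyc_min f n \<longleftrightarrow> j \<in> cyc_min (rm f n) (n-1)"
proof -
  have inj: "inj f" using perm permutation_bijective bij_is_inj by blast
  have self: "x \<in> orbit f x" for x using permutation_self_in_orbit[OF perm] .
  have jn: "j \<noteq> n" using j by auto
  have "{1..n-1} = {1..n} - {n}" by auto
  then have e: "orbit (rm f n) j \<inter> {1..n-1} = (orbit f j \<inter> {1..n}) - {n}"
    using orbit_rm[OF jn inj] by blast
  have M: "Min ((orbit f j \<inter> {1..n}) - {n}) = Min (orbit f j \<inter> {1..n})"
  proof (rule Min_remove)
    show "j \<in> orbit f j \<inter> {1..n}" using j self[of j] by auto
  qed (use j in auto)
  have c1: "j \<in> cyc_min f n \<longleftrightarrow> j = Min (orbit f j \<inter> {1..n})"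
    using j unfolding cyc_min_alt by auto
  have c2: "j \<in> cyc_min (rm f n) (n-1) \<longleftrightarrow> j = Min (orbit (rm f n) j \<inter> {1..n-1})"
    using j unfolding cyc_min_alt by auto
  show ?thesis by (simp only: c1 c2 e M)
qed
lemma cyc_min_step:
  assumes fp: "f permutes A" and A: "A \<subseteq> {0..n}" "n \<in> A" and n: "n \<ge> 1"
    and h0: "0 \<in> A \<longrightarrow> 1 \<in> orbit f 0 \<and> n \<ge> 2"
  shows "cyc_min f n = cyc_min (rm f n) (n-1) \<union> (if f n = n then {n} else {})"
proof -
  have fin: "finite A" using A(1) by (rule finite_subset) simp
  have perm: "permutation f" unfolding permutation_permutes using fp fin by blast
  note lo = lo_lemma[OF perm]
  note hi = hi_lemma[OF fp A n h0]
  show ?thesis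
  proof (intro set_eqI iffI)
    fix j assume jm: "j \<in> cyc_min f n"
    then have "j \<in> {1..n}" using cyc_min_subset by blast
    then show "j \<in> cyc_min (rm f n) (n-1) \<union> (if f n = n then {n} else {})"
    proof (cases "j = n")
      case True then show ?thesis using hi jm by simp
    next
      case False
      then have "j \<in> {1..n-1}" using \<open>j \<in> {1..n}\<close> by auto
      then show ?thesis using lo jm by blast
    qed
  next
    fix j assume j: "j \<in> cyc_min (rm f n) (n-1) \<union> (if f n = n then {n} else {})"
    show "j \<in> cyc_min f n"
    proof (cases "j \<in> cyc_min (rm f n) (n-1)")
      case True
      then have "j \<in> {1..n-1}" using cyc_min_subset by blast
      then show ?thesis using lo True by blast
    next
      case False
      then have "f n = n" "j = n" using j by (auto split: if_splits)
      then show ?thesis using hi by simp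
    qed
  qed
qed

lemma num_cycles_cyc_min:
  assumes fp: "f permutes A" and A: "A \<subseteq> {0..n}" "{1..n} \<subseteq> A"
    and ne: "\<forall>x\<in>A. orbit f x \<inter> {1..n} \<noteq> {}"
  shows "num_cycles f A = card (cyc_min f n)"
proof -
  have fin: "finite A" using A(1) by (rule finite_subset) simp
  have perm: "permutation f" unfolding permutation_permutes using fp fin by blast
  have self: "x \<in> orbit f x" for x using permutation_self_in_orbit[OF perm] .
  have "orbit f ` A = orbit f ` cyc_min f n"
  proof (intro set_eqI iffI)
    fix X assume "X \<in> orbit f ` A"
    then obtain x where x: "x \<in> A" "X = orbit f x" by auto
    let ?m = "Min (orbit f x \<inter> {1..n})"
    have mi: "?m \<in> orbit f x \<inter> {1..n}" using ne x by (intro Min_in) auto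
    have oe: "orbit f ?m = orbit f x" using orbit_eq[OF perm] mi by blast
    have "?m \<in> cyc_min f n" using mi oe unfolding cyc_min_alt by auto
    then show "X \<in> orbit f ` cyc_min f n" using oe x by auto
  next
    fix X assume "X \<in> orbit f ` cyc_min f n"
    then show "X \<in> orbit f ` A" using cyc_min_subset A by blast
  qed
  moreover have "inj_on (orbit f) (cyc_min f n)"
  proof (rule inj_onI)
    fix x y assume xy: "x \<in> cyc_min f n" "y \<in> cyc_min f n" and oe: "orbit f x = orbit f y"
    then have "x = Min (orbit f x \<inter> {1..n})" "y = Min (orbit f y \<inter> {1..n})"
      unfolding cyc_min_alt by auto
    then show "x = y" using oe by metis
  qed
  ultimately show ?thesis unfolding num_cycles_def Orb_orbit
    by (metis card_image)
qed

definition Tset :: "nat \<Rightarrow> nat set \<Rightarrow> (nat \<Rightarrow> nat) set" where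
  "Tset n M = {f. f permutes {1..n} \<and> cyc_min f n = M}"

definition Sset :: "nat \<Rightarrow> nat set \<Rightarrow> (nat \<Rightarrow> nat) set" where
  "Sset n M = {f. f permutes {0..n} \<and> 1 \<in> orbit f 0 \<and> cyc_min f n = M}"

lemma transf:
  fixes n :: nat
  assumes "n \<notin> B" "p permutes B" "b \<in> insert n B" "insert n B \<subseteq> {0..n}" "n \<ge> 1"
    "0 \<in> insert n B \<longrightarrow> 1 \<in> orbit (transpose n b \<circ> p) 0 \<and> n \<ge> 2"
  shows "cyc_min (transpose n b \<circ> p) n = cyc_min p (n-1) \<union> (if b = n then {n} else {})"
  using cyc_min_step[OF step_perm(1)[OF assms(1-3)] assms(4) insertI1 assms(5,6)]
    step_perm(2,3)[OF assms(1-3)] by simp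

lemma orbit01:
  fixes n :: nat
  assumes "n \<ge> 2" "n \<notin> B" "p permutes B" "b \<in> insert n B"
  shows "1 \<in> orbit (transpose n b \<circ> p) 0 \<longleftrightarrow> 1 \<in> orbit p 0"
proof -
  let ?f = "transpose n b \<circ> p"
  have fp: "?f permutes insert n B" using step_perm(1)[OF assms(2-4)] .
  have inj: "inj ?f" using permutes_inj[OF fp] .
  have "orbit (rm ?f n) 0 = orbit ?f 0 - {n}" using orbit_rm[OF _ inj] assms(1) by simp
  then have "orbit p 0 = orbit ?f 0 - {n}" using step_perm(3)[OF assms(2-4)] by simp
  then show ?thesis using assms(1) by auto
qed

lemma split_fact:
  assumes "X \<subseteq> {1..n-1}" "(n::nat) \<ge> 1"
  shows "(X \<union> {n} = M \<longleftrightarrow> n \<in> M \<and> X = M - {n})" and "(X = M \<longleftrightarrow> n \<notin> M \<and> X = M)"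
proof -
  have "n \<notin> X" using assms by auto
  then show "(X \<union> {n} = M \<longleftrightarrow> n \<in> M \<and> X = M - {n})" by auto
  show "(X = M \<longleftrightarrow> n \<notin> M \<and> X = M)" using \<open>n \<notin> X\<close> by auto
qed

lemma sum_two:
  assumes "finite B" "(n::nat) \<notin> B"
  shows "(\<Sum>b\<in>insert n B. card (if b = n then X else Y)) = card X + card B * card Y"
proof -
  have "(\<Sum>b\<in>insert n B. card (if b = n then X else Y)) = card X + (\<Sum>b\<in>B. card (if b = n then X else Y))"
    using assms by (simp add: sum.insert)
  also have "(\<Sum>b\<in>B. card (if b = n then X else Y)) = (\<Sum>b\<in>B. card Y)"
    using assms(2) by (intro sum.cong) auto
  finally show ?thesis by simp
qed

lemma T_rec:
  assumes n: "n \<ge> 1"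
  shows "card (Tset n M) = (if n \<in> M then card (Tset (n-1) (M - {n})) else (n-1) * card (Tset (n-1) M))"
proof -
  define B where "B = {1..n-1}"
  have ins: "{1..n} = insert n B" using n unfolding B_def by auto
  have nB: "n \<notin> B" "finite B" "card B = n - 1" unfolding B_def by auto
  have "card (Tset n M) = card {f. f permutes insert n B \<and> cyc_min f n = M}"
    unfolding Tset_def ins ..
  also have "\<dots> = (\<Sum>b\<in>insert n B. card {p. p permutes B \<and> cyc_min (transpose n b \<circ> p) n = M})"
    using count_insert[OF nB(2,1)] .
  also have "\<dots> = (\<Sum>b\<in>insert n B. card (if b = n then (if n \<in> M then Tset (n-1) (M - {n}) else {})
                          else (if n \<in> M then {} else Tset (n-1) M)))"
  proof (rule sum.cong[OF refl])
    fix b assume b: "b \<in> insert n B"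
    have "{p. p permutes B \<and> cyc_min (transpose n b \<circ> p) n = M} =
      (if b = n then (if n \<in> M then Tset (n-1) (M - {n}) else {})
                          else (if n \<in> M then {} else Tset (n-1) M))"
    proof (intro set_eqI)
      fix p
      show "p \<in> {p. p permutes B \<and> cyc_min (transpose n b \<circ> p) n = M} \<longleftrightarrow>
         p \<in> (if b = n then (if n \<in> M then Tset (n-1) (M - {n}) else {})
                          else (if n \<in> M then {} else Tset (n-1) M))"
      proof (cases "p permutes B")
        case False
        then show ?thesis unfolding Tset_def B_def by auto
      next
        case True
        have "cyc_min (transpose n b \<circ> p) n = cyc_min p (n-1) \<union> (if b = n then {n} else {})"
          using transf[OF nB(1) True b] n ins unfolding B_def by auto
        moreover have "cyc_min p (n-1) \<subseteq> {1..n-1}" by (rule cyc_min_subset)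
        ultimately show ?thesis using True split_fact[of "cyc_min p (n-1)" n M] n
          unfolding Tset_def B_def by auto
      qed
    qed
    then show "card {p. p permutes B \<and> cyc_min (transpose n b \<circ> p) n = M} =
      card (if b = n then (if n \<in> M then Tset (n-1) (M - {n}) else {})
                          else (if n \<in> M then {} else Tset (n-1) M))" by simp
  qed
  also have "\<dots> = (if n \<in> M then card (Tset (n-1) (M - {n})) else (n-1) * card (Tset (n-1) M))"
  proof (cases "n \<in> M")
    case True
    then show ?thesis using sum_two[OF nB(2,1), of "Tset (n-1) (M - {n})" "{}"] by simp
  next
    case False
    then show ?thesis using sum_two[OF nB(2,1), of "{}" "Tset (n-1) M"] nB(3) by simp
  qed
  finally show ?thesis .
qed

lemma S_rec:
  assumes n: "n \<ge> 2"
  shows "card (Sset n M) = (if n \<in> M then card (Sset (n-1) (M - {n})) else n * card (Sset (n-1) M))"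
proof -
  define B where "B = {0..n-1}"
  have ins: "{0..n} = insert n B" using n unfolding B_def by auto
  have nB: "n \<notin> B" "finite B" "card B = n" unfolding B_def using n by auto
  have "card (Sset n M) = card {f. f permutes insert n B \<and> (1 \<in> orbit f 0 \<and> cyc_min f n = M)}"
    unfolding Sset_def ins ..
  also have "\<dots> = (\<Sum>b\<in>insert n B. card {p. p permutes B \<and> (1 \<in> orbit (transpose n b \<circ> p) 0 \<and> cyc_min (transpose n b \<circ> p) n = M)})"
    using count_insert[OF nB(2,1)] .
  also have "\<dots> = (\<Sum>b\<in>insert n B. card (if b = n then (if n \<in> M then Sset (n-1) (M - {n}) else {})
                          else (if n \<in> M then {} else Sset (n-1) M)))"
  proof (rule sum.cong[OF refl])
    fix b assume b: "b \<in> insert n B"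
    have "{p. p permutes B \<and> (1 \<in> orbit (transpose n b \<circ> p) 0 \<and> cyc_min (transpose n b \<circ> p) n = M)} =
      (if b = n then (if n \<in> M then Sset (n-1) (M - {n}) else {})
                          else (if n \<in> M then {} else Sset (n-1) M))"
    proof (intro set_eqI)
      fix p
      show "p \<in> {p. p permutes B \<and> (1 \<in> orbit (transpose n b \<circ> p) 0 \<and> cyc_min (transpose n b \<circ> p) n = M)} \<longleftrightarrow>
         p \<in> (if b = n then (if n \<in> M then Sset (n-1) (M - {n}) else {})
                          else (if n \<in> M then {} else Sset (n-1) M))"
      proof (cases "p permutes B \<and> 1 \<in> orbit p 0")
        case False
        then show ?thesis using orbit01[OF n nB(1) _ b] unfolding Sset_def B_def by auto
      next
        case True
        then have o1: "1 \<in> orbit (transpose n b \<circ> p) 0" using orbit01[OF n nB(1) _ b] by blast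
        have "cyc_min (transpose n b \<circ> p) n = cyc_min p (n-1) \<union> (if b = n then {n} else {})"
          using transf[OF nB(1) _ b] True o1 n ins unfolding B_def by auto
        moreover have "cyc_min p (n-1) \<subseteq> {1..n-1}" by (rule cyc_min_subset)
        ultimately show ?thesis using True o1 split_fact[of "cyc_min p (n-1)" n M] n
          unfolding Sset_def B_def by auto
      qed
    qed
    then show "card {p. p permutes B \<and> (1 \<in> orbit (transpose n b \<circ> p) 0 \<and> cyc_min (transpose n b \<circ> p) n = M)} =
      card (if b = n then (if n \<in> M then Sset (n-1) (M - {n}) else {})
                          else (if n \<in> M then {} else Sset (n-1) M))" by simp
  qed
  also have "\<dots> = (if n \<in> M then card (Sset (n-1) (M - {n})) else n * card (Sset (n-1) M))"
  proof (cases "n \<in> M")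
    case True
    then show ?thesis using sum_two[OF nB(2,1), of "Sset (n-1) (M - {n})" "{}"] by simp
  next
    case False
    then show ?thesis using sum_two[OF nB(2,1), of "{}" "Sset (n-1) M"] nB(3) by simp
  qed
  finally show ?thesis .
qed

lemma T0: "card (Tset 0 M) = (if M = {} then 1 else 0)"
proof -
  have "cyc_min id 0 = {}" unfolding cyc_min_def by auto
  then have "Tset 0 M = (if M = {} then {id} else {})" unfolding Tset_def by auto
  then show ?thesis by simp
qed

lemma T1: "card (Tset 1 M) = (if M = {1} then 1 else 0)"
proof (cases "1 \<in> M")
  case True
  have "M - {1} = {} \<longleftrightarrow> M = {1}" using True by blast
  then show ?thesis using T_rec[of 1 M] T0[of "M - {1}"] True by simp
next
  case False
  then have "M \<noteq> {1}" by blast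
  then show ?thesis using T_rec[of 1 M] False by simp
qed

lemma sing_set: "{p. p permutes {a} \<and> P p} = (if P id then {id} else {})"
  by (auto simp: permutes_sing)

lemma S1: "card (Sset 1 M) = (if M = {1} then 1 else 0)"
proof -
  have ins: "{0..1::nat} = insert 1 {0}" by auto
  let ?Q = "\<lambda>f. 1 \<in> orbit f 0 \<and> cyc_min f 1 = M"
  let ?t = "transpose (1::nat) 0"
  have "card (Sset 1 M) = card {f. f permutes insert 1 {0::nat} \<and> ?Q f}"
    unfolding Sset_def ins ..
  also have "\<dots> = (\<Sum>b\<in>insert 1 {0}. card {p. p permutes {0} \<and> ?Q (transpose 1 b \<circ> p)})"
    by (rule count_insert) auto
  also have "\<dots> = card {p. p permutes {0} \<and> ?Q (transpose 1 1 \<circ> p)}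
                 + card {p. p permutes {0} \<and> ?Q (transpose 1 0 \<circ> p)}" by simp
  also have "\<dots> = (if ?Q (transpose 1 1 \<circ> id) then 1 else 0) + (if ?Q (?t \<circ> id) then 1 else 0)"
    unfolding sing_set by simp
  finally have c: "card (Sset 1 M) = (if ?Q (transpose 1 1 \<circ> id) then 1 else 0) + (if ?Q (?t \<circ> id) then 1 else 0)" .
  have n1: "\<not> ?Q (transpose 1 1 \<circ> id)"
  proof -
    have "orbit id (0::nat) = {0}" by (simp add: orbit_eq_singleton_iff)
    moreover have "transpose (1::nat) 1 \<circ> id = id" by simp
    ultimately show ?thesis by (simp only:) simp
  qed
  have n2: "?Q (?t \<circ> id) \<longleftrightarrow> M = {1}"
  proof -
    have a: "1 \<in> orbit ?t 0" using orbit.base[of ?t 0] by simp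
    have b: "1 \<in> orbit ?t 1" using orbit.step[OF orbit.base[of ?t 1]] by simp
    have e: "orbit ?t 1 \<inter> {1..1} = {1}" using b by auto
    have g: "{j \<in> {1..1::nat}. P j} = (if P 1 then {1} else {})" for P by auto
    have "cyc_min ?t 1 = (if 1 = Min (orbit ?t 1 \<inter> {1..1}) then {1} else {})"
      unfolding cyc_min_alt g ..
    then have "cyc_min ?t 1 = {1}" unfolding e by simp
    moreover have "?t \<circ> id = ?t" by simp
    ultimately show ?thesis using a by (simp only:) blast
  qed
  show ?thesis unfolding c using n1 n2 by simp
qed

definition F :: "nat \<Rightarrow> nat set \<Rightarrow> nat" where
  "F n M = card (Sset n M) * card (Tset n M)"

lemma F1: "F 1 M = (if M = {1} then 1 else 0)"
  unfolding F_def S1 T1 by simp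

lemma F_rec:
  assumes "n \<ge> 2"
  shows "F n M = (if n \<in> M then F (n-1) (M - {n}) else ((n-1) * n) * F (n-1) M)"
  using S_rec[OF assms, of M] T_rec[of n M] assms unfolding F_def by (auto simp: algebra_simps)

fun u :: "nat \<Rightarrow> nat \<Rightarrow> nat" where
  "u 0 k = (if k = 0 then 1 else 0)"
| "u (Suc n) k = (if k < 1 \<or> k > Suc n then 0 else u n (k - 1) + n * (n + 1) * u n k)"

lemma u_big: "k > n \<Longrightarrow> u n k = 0"
  by (induction n arbitrary: k) auto

lemma u_zero: "n \<ge> 1 \<Longrightarrow> u n 0 = 0"
  by (cases n) auto

lemma js_u: "js 1 n k = (if even (n + k) then 1 else -1) * int (u n k)"
proof (induction n arbitrary: k)
  case 0
  then show ?case by simp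
next
  case (Suc n)
  show ?case
  proof (cases "k < 1 \<or> k > Suc n")
    case True
    then show ?thesis by auto
  next
    case False
    then have k: "k \<ge> 1" by simp
    then have e: "even (n + (k - 1)) \<longleftrightarrow> even (Suc n + k)" by (cases k) auto
    have e2: "even (n + k) \<longleftrightarrow> \<not> even (Suc n + k)" by simp
    show ?thesis using False Suc.IH[of "k-1"] Suc.IH[of k] e e2
      by (auto simp: algebra_simps)
  qed
qed

lemma abs_ls: "\<bar>ls n k\<bar> = int (u n k)"
  unfolding ls_def js_u by simp

definition Xs :: "nat \<Rightarrow> nat \<Rightarrow> nat set set" where
  "Xs n k = {M. M \<subseteq> {1..n} \<and> card M = k}"

lemma Xs_fin: "finite (Xs n k)"
  unfolding Xs_def by (rule finite_subset[of _ "Pow {1..n}"]) auto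

lemma t1: "(\<Sum>M\<in>Xs n k. F n M) = (\<Sum>M\<in>{M \<in> Xs n k. n \<in> M}. F n M) + (\<Sum>M\<in>{M \<in> Xs n k. n \<notin> M}. F n M)"
proof -
  have un: "Xs n k = {M \<in> Xs n k. n \<in> M} \<union> {M \<in> Xs n k. n \<notin> M}" by blast
  have f1: "finite {M \<in> Xs n k. n \<in> M}" by (rule finite_subset[OF _ Xs_fin]) blast
  have f2: "finite {M \<in> Xs n k. n \<notin> M}" by (rule finite_subset[OF _ Xs_fin]) blast
  show ?thesis by (subst un, rule sum.union_disjoint[OF f1 f2]) blast
qed
lemma t2: "{M \<in> Xs n k. n \<notin> M} = Xs (n-1) k"
proof -
  have "{1..n-1} = {1..n} - {n}" by auto
  then show ?thesis unfolding Xs_def by blast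
qed

lemma Xs_mem: "M \<in> Xs n k \<longleftrightarrow> M \<subseteq> {1..n} \<and> card M = k"
  unfolding Xs_def by simp

lemma Xs_finite_mem: "M \<in> Xs n k \<Longrightarrow> finite M"
  unfolding Xs_mem using finite_subset by blast

lemma t3:
  assumes n: "n \<ge> 2"
  shows "(\<Sum>M\<in>{M \<in> Xs n k. n \<in> M}. F n M) = (if k = 0 then 0 else (\<Sum>M\<in>Xs (n-1) (k-1). F (n-1) M))"
proof (cases "k = 0")
  case True
  have e: "{M \<in> Xs n k. n \<in> M} = {}"
  proof -
    have "M = {}" if "M \<in> Xs n 0" for M
      using that Xs_finite_mem[OF that] unfolding Xs_mem by simp
    then show ?thesis using True by blast
  qed
  show ?thesis unfolding e using True by simp
next
  case False
  have im: "{M \<in> Xs n k. n \<in> M} = insert n ` Xs (n-1) (k-1)"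
  proof (intro set_eqI iffI)
    fix M assume M: "M \<in> {M \<in> Xs n k. n \<in> M}"
    then have fin: "finite M" using Xs_finite_mem by blast
    have s: "M \<subseteq> {1..n}" "card M = k" "n \<in> M" using M unfolding Xs_mem by auto
    have "M - {n} \<subseteq> {1..n-1}" using s(1) by auto
    moreover have "card (M - {n}) = k - 1" using s fin by simp
    ultimately have "M - {n} \<in> Xs (n-1) (k-1)" unfolding Xs_mem by blast
    moreover have "M = insert n (M - {n})" using s(3) by blast
    ultimately show "M \<in> insert n ` Xs (n-1) (k-1)" by blast
  next
    fix M assume "M \<in> insert n ` Xs (n-1) (k-1)"
    then obtain M' where M': "M' \<in> Xs (n-1) (k-1)" "M = insert n M'" by blast
    then have s: "M' \<subseteq> {1..n-1}" "card M' = k - 1" unfolding Xs_mem by auto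
    have fin: "finite M'" using Xs_finite_mem[OF M'(1)] .
    have nM: "n \<notin> M'" using s(1) n by auto
    have "{1..n-1} \<subseteq> {1..n}" by auto
    moreover have "n \<in> {1..n}" using n by simp
    ultimately have "M \<subseteq> {1..n}" using s(1) M'(2) by blast
    moreover have "card M = k" using M'(2) fin nM s(2) False by simp
    ultimately show "M \<in> {M \<in> Xs n k. n \<in> M}" using M'(2) unfolding Xs_mem by blast
  qed
  have nn: "n \<notin> M" if "M \<in> Xs (n-1) (k-1)" for M
    using that n unfolding Xs_mem by auto
  have inj: "inj_on (insert n) (Xs (n-1) (k-1))"
  proof (rule inj_onI)
    fix M M' assume a: "M \<in> Xs (n-1) (k-1)" "M' \<in> Xs (n-1) (k-1)" "insert n M = insert n M'"
    have "n \<notin> M" "n \<notin> M'" using nn a(1,2) by auto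
    then show "M = M'" using a(3) by (metis Diff_insert_absorb)
  qed
  have "(\<Sum>M\<in>{M \<in> Xs n k. n \<in> M}. F n M) = (\<Sum>M\<in>Xs (n-1) (k-1). F n (insert n M))"
    unfolding im using sum.reindex[OF inj] by simp
  also have "\<dots> = (\<Sum>M\<in>Xs (n-1) (k-1). F (n-1) M)"
  proof (rule sum.cong[OF refl])
    fix M assume "M \<in> Xs (n-1) (k-1)"
    then have "n \<notin> M" using nn by blast
    then show "F n (insert n M) = F (n-1) M" using F_rec[OF n, of "insert n M"] by simp
  qed
  finally show ?thesis using False by simp
qed

lemma G_step:
  assumes n: "n \<ge> 2"
  shows "(\<Sum>M\<in>Xs n k. F n M) = (if k = 0 then 0 else (\<Sum>M\<in>Xs (n-1) (k-1). F (n-1) M))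
          + ((n-1) * n) * (\<Sum>M\<in>Xs (n-1) k. F (n-1) M)"
proof -
  have "(\<Sum>M\<in>Xs (n-1) k. F n M) = (\<Sum>M\<in>Xs (n-1) k. ((n-1) * n) * F (n-1) M)"
  proof (rule sum.cong[OF refl])
    fix M assume "M \<in> Xs (n-1) k"
    then have "n \<notin> M" using n unfolding Xs_mem by auto
    then show "F n M = ((n-1) * n) * F (n-1) M" using F_rec[OF n, of M] by simp
  qed
  then show ?thesis using t1[of n k] t2[of n k] t3[OF n, of k] by (simp add: sum_distrib_left)
qed

lemma G1: "(\<Sum>M\<in>Xs 1 k. F 1 M) = u 1 k"
proof -
  have "(\<Sum>M\<in>Xs 1 k. F 1 M) = (\<Sum>M\<in>Xs 1 k. if M = {1} then 1 else 0)"
    unfolding F1 ..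
  also have "\<dots> = (if {1} \<in> Xs 1 k then 1 else 0)"
    using Xs_fin by (simp add: sum.delta')
  also have "\<dots> = (if k = 1 then 1 else 0)" unfolding Xs_def by auto
  also have "\<dots> = u 1 k" by auto
  finally show ?thesis .
qed

lemma G: "n \<ge> 1 \<Longrightarrow> (\<Sum>M\<in>Xs n k. F n M) = u n k"
proof (induction n arbitrary: k rule: nat_induct_at_least)
  case base
  then show ?case using G1 by simp
next
  case (Suc m)
  have step: "(\<Sum>M\<in>Xs (Suc m) k. F (Suc m) M) = (if k = 0 then 0 else u m (k-1)) + (m * Suc m) * u m k"
    using G_step[of "Suc m" k] Suc by simp
  show ?case
  proof (cases "k = 0")
    case True
    then show ?thesis using step u_zero[OF Suc.hyps] by simp
  next
    case False
    show ?thesis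
    proof (cases "k > Suc m")
      case True
      then show ?thesis using step u_big[of m k] u_big[of m "k-1"] by simp
    next
      case False
      then show ?thesis using step \<open>k \<noteq> 0\<close> by simp
    qed
  qed
qed


lemma num_cyc_S:
  assumes fp: "f permutes {0..n}" and o: "1 \<in> orbit f 0" and n: "n \<ge> 1"
  shows "num_cycles f {0..n} = card (cyc_min f n)"
proof (rule num_cycles_cyc_min[OF fp])
  have perm: "permutation f" unfolding permutation_permutes using fp by blast
  show "\<forall>x\<in>{0..n}. orbit f x \<inter> {1..n} \<noteq> {}"
  proof
    fix x assume x: "x \<in> {0..n}"
    show "orbit f x \<inter> {1..n} \<noteq> {}"
    proof (cases "x = 0")
      case True
      then have "1 \<in> orbit f x \<inter> {1..n}" using o n by simp
      then show ?thesis by blast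
    next
      case False
      then have "x \<in> orbit f x \<inter> {1..n}" using x permutation_self_in_orbit[OF perm] by simp
      then show ?thesis by blast
    qed
  qed
qed auto

lemma num_cyc_T:
  assumes fp: "f permutes {1..n}"
  shows "num_cycles f {1..n} = card (cyc_min f n)"
proof (rule num_cycles_cyc_min[OF fp])
  have perm: "permutation f" unfolding permutation_permutes using fp by blast
  show "\<forall>x\<in>{1..n}. orbit f x \<inter> {1..n} \<noteq> {}"
  proof
    fix x assume x: "x \<in> {1..n}"
    then have "x \<in> orbit f x \<inter> {1..n}" using permutation_self_in_orbit[OF perm] by simp
    then show "orbit f x \<inter> {1..n} \<noteq> {}" by blast
  qed
qed auto

theorem corollary15:
  fixes n k :: nat
  assumes "1 \<le> k" and "k \<le> n"
  shows "\<bar>ls n k\<bar> = int (card {(\<sigma>, \<tau>).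
            \<sigma> permutes {0..n} \<and> num_cycles \<sigma> {0..n} = k \<and>
            \<tau> permutes {1..n} \<and> num_cycles \<tau> {1..n} = k \<and>
            1 \<in> Orb \<sigma> 0 \<and> cyc_min \<sigma> n = cyc_min \<tau> n})"
proof -
  have n: "n \<ge> 1" using assms by simp
  let ?P = "{(\<sigma>, \<tau>).
            \<sigma> permutes {0..n} \<and> num_cycles \<sigma> {0..n} = k \<and>
            \<tau> permutes {1..n} \<and> num_cycles \<tau> {1..n} = k \<and>
            1 \<in> Orb \<sigma> 0 \<and> cyc_min \<sigma> n = cyc_min \<tau> n}"
  let ?S = "SIGMA M:Xs n k. Sset n M \<times> Tset n M"
  have eq: "?P = snd ` ?S"
  proof (intro set_eqI iffI)
    fix x assume x: "x \<in> ?P"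
    obtain s t where st: "x = (s, t)" by fastforce
    have h: "s permutes {0..n}" "num_cycles s {0..n} = k" "t permutes {1..n}"
      "num_cycles t {1..n} = k" "1 \<in> orbit s 0" "cyc_min s n = cyc_min t n"
      using x st unfolding Orb_orbit by auto
    let ?M = "cyc_min s n"
    have "card ?M = k" using num_cyc_S[OF h(1) h(5) n] h(2) by simp
    then have "?M \<in> Xs n k" unfolding Xs_mem using cyc_min_subset by blast
    moreover have "s \<in> Sset n ?M" using h unfolding Sset_def by simp
    moreover have "t \<in> Tset n ?M" using h unfolding Tset_def by simp
    ultimately have "(?M, (s, t)) \<in> ?S" by simp
    then show "x \<in> snd ` ?S" using st by force
  next
    fix x assume "x \<in> snd ` ?S"
    then obtain M s t where m: "M \<in> Xs n k" "s \<in> Sset n M" "t \<in> Tset n M" "x = (s, t)" by force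
    have h: "s permutes {0..n}" "1 \<in> orbit s 0" "cyc_min s n = M" "t permutes {1..n}" "cyc_min t n = M"
      using m unfolding Sset_def Tset_def by auto
    have c: "card M = k" using m(1) unfolding Xs_mem by simp
    have "num_cycles s {0..n} = k" using num_cyc_S[OF h(1) h(2) n] h(3) c by simp
    moreover have "num_cycles t {1..n} = k" using num_cyc_T[OF h(4)] h(5) c by simp
    ultimately show "x \<in> ?P" using h m(4) unfolding Orb_orbit by simp
  qed
  have inj: "inj_on snd ?S"
  proof (rule inj_onI)
    fix a b assume a: "a \<in> ?S" and b: "b \<in> ?S" and e: "snd a = snd b"
    have "fst a = cyc_min (fst (snd a)) n" using a unfolding Sset_def by auto
    moreover have "fst b = cyc_min (fst (snd b)) n" using b unfolding Sset_def by auto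
    ultimately have "fst a = fst b" using e by simp
    then show "a = b" using e by (simp add: prod_eq_iff)
  qed
  have finS: "finite (Sset n M)" for M
    unfolding Sset_def by (rule finite_subset[OF _ finite_permutations[of "{0..n}"]]) auto
  have finT: "finite (Tset n M)" for M
    unfolding Tset_def by (rule finite_subset[OF _ finite_permutations[of "{1..n}"]]) auto
  have "card ?P = card ?S" unfolding eq using card_image[OF inj] .
  also have "\<dots> = (\<Sum>M\<in>Xs n k. card (Sset n M \<times> Tset n M))"
    using Xs_fin finS finT by (subst card_SigmaI) auto
  also have "\<dots> = (\<Sum>M\<in>Xs n k. F n M)"
    unfolding F_def card_cartesian_product ..
  also have "\<dots> = u n k" using G[OF n] .
  finally show ?thesis using abs_ls by simp
qed
end
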